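(* Let $\lambda\in X^+$ be a $p$-core. Let $\alpha=\varepsilon_i-\varepsilon_j$ with $1\le i<j\le m$, and suppose $\langle\lambda+\rho,\alpha^\vee\rangle=a+lp$ with integers $a,l>0$. Then $\chi(s_{\alpha,l}\cdot\lambda)=0$.
   Context: Setup: $p>2$ is a prime, $m\ge1$, weight lattice $X=\mathbb Z^m$ of $\mathrm{Sp}_{2m}$ with standard basis $\varepsilon_i$, standard inner product, $\alpha^\vee=2\alpha/\langle\alpha,\alpha\rangle$. $X^+=\{\lambda\in\mathbb Z^m:\lambda_1\ge\dots\ge\lambda_m\ge0\}$. $\rho=(m,m-1,\dots,1)$. $s_{\alpha,l}(x)=x-(\langle x,\alpha^\vee\rangle-lp)\alpha$, $w\cdot x=w(x+\rho)-\rho$. For $\mu\in X$, $\chi(\mu)$ is the Weyl character of type $C_m$; $\chi(\mu)=0$ iff some entry of $\mu+\rho$ is $0$ or two entries of $\mu+\rho$ are equal up to sign. A $p$-core is $\lambda\in X^+$ such that for all $i$ and all integers $l\ge1$ with $(\lambda+\rho)_i-lp>0$, the number $(\lambda+\rho)_i-lp$ occurs as an entry of $\lambda+\rho$. *)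

theory Defs
  imports "HOL-Combinatorics.Permutations" "HOL-Computational_Algebra.Primes"
begin

text \<open>Weights of Sp_{2m}: X = Z^m, represented as functions nat => int that vanish
  outside the index set {1..m}.\<close>

definition wts :: "nat \<Rightarrow> (nat \<Rightarrow> int) set" where
  "wts m = {x. \<forall>k. k \<notin> {1..m} \<longrightarrow> x k = 0}"

definition addv :: "(nat \<Rightarrow> int) \<Rightarrow> (nat \<Rightarrow> int) \<Rightarrow> nat \<Rightarrow> int" where
  "addv x y = (\<lambda>k. x k + y k)"

definition subv :: "(nat \<Rightarrow> int) \<Rightarrow> (nat \<Rightarrow> int) \<Rightarrow> nat \<Rightarrow> int" where
  "subv x y = (\<lambda>k. x k - y k)"

definition eps :: "nat \<Rightarrow> nat \<Rightarrow> int" where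
  "eps i = (\<lambda>k. if k = i then 1 else 0)"

definition inner_w :: "nat \<Rightarrow> (nat \<Rightarrow> int) \<Rightarrow> (nat \<Rightarrow> int) \<Rightarrow> int" where
  "inner_w m x y = (\<Sum>k\<in>{1..m}. x k * y k)"

text \<open>pairing with the coroot: <x, alpha^vee> = 2<x,alpha>/<alpha,alpha>
  (an integer for roots alpha and weights x)\<close>
definition coroot_pair :: "nat \<Rightarrow> (nat \<Rightarrow> int) \<Rightarrow> (nat \<Rightarrow> int) \<Rightarrow> int" where
  "coroot_pair m x \<alpha> = (2 * inner_w m x \<alpha>) div inner_w m \<alpha> \<alpha>"

definition rho :: "nat \<Rightarrow> nat \<Rightarrow> int" where
  "rho m = (\<lambda>k. if 1 \<le> k \<and> k \<le> m then int (m - k + 1) else 0)"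

definition s_aff :: "nat \<Rightarrow> nat \<Rightarrow> (nat \<Rightarrow> int) \<Rightarrow> int \<Rightarrow> (nat \<Rightarrow> int) \<Rightarrow> nat \<Rightarrow> int" where
  "s_aff p m \<alpha> l x = (\<lambda>k. x k - (coroot_pair m x \<alpha> - l * int p) * \<alpha> k)"

definition dot :: "nat \<Rightarrow> ((nat \<Rightarrow> int) \<Rightarrow> (nat \<Rightarrow> int)) \<Rightarrow> (nat \<Rightarrow> int) \<Rightarrow> nat \<Rightarrow> int" where
  "dot m w x = subv (w (addv x (rho m))) (rho m)"

definition dominant :: "nat \<Rightarrow> (nat \<Rightarrow> int) \<Rightarrow> bool" where
  "dominant m x \<longleftrightarrow> x \<in> wts m \<and> (\<forall>i j. 1 \<le> i \<and> i \<le> j \<and> j \<le> m \<longrightarrow> x j \<le> x i)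
     \<and> (\<forall>k\<in>{1..m}. 0 \<le> x k)"

definition p_core :: "nat \<Rightarrow> nat \<Rightarrow> (nat \<Rightarrow> int) \<Rightarrow> bool" where
  "p_core p m lam \<longleftrightarrow> dominant m lam \<and>
     (\<forall>i\<in>{1..m}. \<forall>l::int. l \<ge> 1 \<longrightarrow> addv lam (rho m) i - l * int p > 0 \<longrightarrow>
        (\<exists>j\<in>{1..m}. addv lam (rho m) j = addv lam (rho m) i - l * int p))"

text \<open>Weyl group of type C_m: signed permutations (sigma, e) of {1..m}.\<close>
definition weyl :: "nat \<Rightarrow> ((nat \<Rightarrow> nat) \<times> (nat \<Rightarrow> int)) set" where
  "weyl m = {(\<sigma>, e). \<sigma> permutes {1..m} \<and> (\<forall>k. e k = 1 \<or> e k = -1)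
                       \<and> (\<forall>k. k \<notin> {1..m} \<longrightarrow> e k = 1)}"

definition wact :: "(nat \<Rightarrow> nat) \<times> (nat \<Rightarrow> int) \<Rightarrow> (nat \<Rightarrow> int) \<Rightarrow> nat \<Rightarrow> int" where
  "wact w x = (\<lambda>k. snd w k * x (fst w k))"

definition wsgn :: "nat \<Rightarrow> (nat \<Rightarrow> nat) \<times> (nat \<Rightarrow> int) \<Rightarrow> int" where
  "wsgn m w = sign (fst w) * (\<Prod>k\<in>{1..m}. snd w k)"

text \<open>Elements of the group ring Z[X]: finitely supported functions X => int.\<close>
definition grp_ring :: "nat \<Rightarrow> ((nat \<Rightarrow> int) \<Rightarrow> int) set" where
  "grp_ring m = {f. finite {x. f x \<noteq> 0} \<and> {x. f x \<noteq> 0} \<subseteq> wts m}"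

definition gmult :: "((nat \<Rightarrow> int) \<Rightarrow> int) \<Rightarrow> ((nat \<Rightarrow> int) \<Rightarrow> int) \<Rightarrow> (nat \<Rightarrow> int) \<Rightarrow> int" where
  "gmult f g = (\<lambda>x. \<Sum>y\<in>{y. f y \<noteq> 0}. f y * g (subv x y))"

definition altsum :: "nat \<Rightarrow> (nat \<Rightarrow> int) \<Rightarrow> (nat \<Rightarrow> int) \<Rightarrow> int" where
  "altsum m \<nu> = (\<lambda>x. \<Sum>w\<in>{w\<in>weyl m. wact w \<nu> = x}. wsgn m w)"

text \<open>Weyl character chi(mu) = A(mu + rho) / A(rho) (Weyl character formula),
  the unique element of Z[X] with chi(mu) * A(rho) = A(mu + rho).\<close>
definition weyl_char :: "nat \<Rightarrow> (nat \<Rightarrow> int) \<Rightarrow> (nat \<Rightarrow> int) \<Rightarrow> int" where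
  "weyl_char m \<mu> = (THE c. c \<in> grp_ring m \<and>
      gmult c (altsum m (rho m)) = altsum m (addv \<mu> (rho m)))"

end

theory Submission
  imports Defs
begin

lemma sum_eps: "(\<Sum>k\<in>{1..m}. x k * eps i k) = (if i \<in> {1..m} then x i else 0)"
proof -
  have "(\<Sum>k\<in>{1..m}. x k * eps i k) = (\<Sum>k\<in>{1..m}. if k = i then x k else 0)"
    by (rule sum.cong) (auto simp: eps_def)
  thus ?thesis by (simp only: sum.delta finite_atLeastAtMost)
qed

lemma inner_eps_diff:
  assumes "i \<in> {1..m}" "j \<in> {1..m}" "i \<noteq> j"
  shows "inner_w m x (subv (eps i) (eps j)) = x i - x j"
proof -
  have "inner_w m x (subv (eps i) (eps j)) = (\<Sum>k\<in>{1..m}. x k * eps i k) - (\<Sum>k\<in>{1..m}. x k * eps j k)"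
    unfolding inner_w_def subv_def by (simp add: right_diff_distrib sum_subtractf)
  also have "\<dots> = x i - x j" using assms by (simp only: sum_eps if_True)
  finally show ?thesis .
qed

lemma coroot_eps_diff:
  assumes "i \<in> {1..m}" "j \<in> {1..m}" "i \<noteq> j"
  shows "coroot_pair m x (subv (eps i) (eps j)) = x i - x j"
proof -
  show ?thesis unfolding coroot_pair_def inner_eps_diff[OF assms] using assms(3) by (simp add: subv_def eps_def)
qed

lemma rho_pos: "k \<in> {1..m} \<Longrightarrow> rho m k > 0" by (auto simp: rho_def)
lemma rho_out: "k \<notin> {1..m} \<Longrightarrow> rho m k = 0" by (auto simp: rho_def)
lemma rho_inj: "k \<in> {1..m} \<Longrightarrow> k' \<in> {1..m} \<Longrightarrow> rho m k = rho m k' \<Longrightarrow> k = k'"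
  by (auto simp: rho_def)

lemma weyl_norm:
  assumes "w \<in> weyl m"
  shows "(\<Sum>k\<in>{1..m}. (wact w (rho m) k)^2) = (\<Sum>k\<in>{1..m}. (rho m k)^2)"
proof -
  obtain \<sigma> e where w: "w = (\<sigma>, e)" "\<sigma> permutes {1..m}" "\<forall>k. e k = 1 \<or> e k = -1"
    using assms unfolding weyl_def by auto
  have "(\<Sum>k\<in>{1..m}. (wact w (rho m) k)^2) = (\<Sum>k\<in>{1..m}. (rho m (\<sigma> k))^2)"
  proof (rule sum.cong)
    fix k show "(wact w (rho m) k)^2 = (rho m (\<sigma> k))^2"
      using w(3)[rule_format, of k] by (auto simp: wact_def w(1) power_mult_distrib)
  qed simp
  also have "\<dots> = (\<Sum>k\<in>{1..m}. (rho m k)^2)"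
    using sum.reindex_bij_betw[OF permutes_imp_bij[OF w(2)], of "\<lambda>k. (rho m k)^2"] by simp
  finally show ?thesis .
qed

lemma weyl_out:
  assumes "w \<in> weyl m" "k \<notin> {1..m}"
  shows "wact w (rho m) k = 0"
proof -
  obtain \<sigma> e where w: "w = (\<sigma>, e)" "\<sigma> permutes {1..m}"
    using assms unfolding weyl_def by auto
  have "\<sigma> k = k" using w(2) assms(2) by (simp add: permutes_not_in)
  thus ?thesis using assms(2) by (simp add: wact_def w(1) rho_out)
qed

lemma phi_ineq:
  assumes "w \<in> weyl m"
  shows "2 * (inner_w m (rho m) (rho m) - inner_w m (rho m) (wact w (rho m)))
     = (\<Sum>k\<in>{1..m}. (rho m k - wact w (rho m) k)^2)"
proof -
  have "(\<Sum>k\<in>{1..m}. (rho m k - wact w (rho m) k)^2) =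
     (\<Sum>k\<in>{1..m}. (rho m k)^2) + (\<Sum>k\<in>{1..m}. (wact w (rho m) k)^2)
     - 2 * (\<Sum>k\<in>{1..m}. rho m k * wact w (rho m) k)"
    by (simp add: power2_diff sum.distrib sum_subtractf sum_distrib_left algebra_simps)
  thus ?thesis using weyl_norm[OF assms] unfolding inner_w_def by (simp add: power2_eq_square)
qed

lemma phi_le:
  assumes "w \<in> weyl m"
  shows "inner_w m (rho m) (wact w (rho m)) \<le> inner_w m (rho m) (rho m)"
proof -
  have "0 \<le> (\<Sum>k\<in>{1..m}. (rho m k - wact w (rho m) k)^2)" by (intro sum_nonneg) simp
  thus ?thesis using phi_ineq[OF assms] by simp
qed

lemma phi_eq:
  assumes "w \<in> weyl m" "inner_w m (rho m) (wact w (rho m)) = inner_w m (rho m) (rho m)"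
  shows "wact w (rho m) = rho m"
proof
  fix k
  have s: "(\<Sum>k\<in>{1..m}. (rho m k - wact w (rho m) k)^2) = 0" using phi_ineq[OF assms(1)] assms(2) by simp
  show "wact w (rho m) k = rho m k"
  proof (cases "k \<in> {1..m}")
    case True
    have "(rho m k - wact w (rho m) k)^2 = 0"
      using sum_nonneg_eq_0_iff[of "{1..m}" "\<lambda>k. (rho m k - wact w (rho m) k)^2"] s True by simp
    thus ?thesis by simp
  next
    case False thus ?thesis using weyl_out[OF assms(1)] rho_out by simp
  qed
qed

lemma fix_rho:
  assumes "w \<in> weyl m" "wact w (rho m) = rho m"
  shows "w = (id, \<lambda>_. 1)"
proof -
  obtain \<sigma> e where w: "w = (\<sigma>, e)" "\<sigma> permutes {1..m}" "\<forall>k. e k = 1 \<or> e k = -1"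
    "\<forall>k. k \<notin> {1..m} \<longrightarrow> e k = 1"
    using assms unfolding weyl_def by auto
  have h: "\<sigma> k = k \<and> e k = 1" for k
  proof (cases "k \<in> {1..m}")
    case True
    have sk: "\<sigma> k \<in> {1..m}" by (metis permutes_in_image[OF w(2)] True)
    have eq: "e k * rho m (\<sigma> k) = rho m k" using fun_cong[OF assms(2), of k] by (simp add: wact_def w(1))
    have "e k = 1"
    proof (rule ccontr)
      assume "e k \<noteq> 1" hence "e k = -1" using w(3) by auto
      thus False using eq rho_pos[OF sk] rho_pos[OF True] by simp
    qed
    thus ?thesis using eq rho_inj[OF sk True] by simp
  next
    case False thus ?thesis using w(2,4) by (simp add: permutes_not_in)
  qed
  thus ?thesis using w(1) by auto
qed

lemma altsum_rho: "altsum m (rho m) (rho m) = 1"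
proof -
  have "{w\<in>weyl m. wact w (rho m) = rho m} = {(id, \<lambda>_. 1)}"
  proof (intro equalityI subsetI)
    fix w :: "(nat\<Rightarrow>nat)\<times>(nat\<Rightarrow>int)" assume "w \<in> {w\<in>weyl m. wact w (rho m) = rho m}"
    hence "w \<in> weyl m" "wact w (rho m) = rho m" by auto
    thus "w \<in> {(id, \<lambda>_. 1)}" using fix_rho by blast
  next
    fix w :: "(nat\<Rightarrow>nat)\<times>(nat\<Rightarrow>int)" assume "w \<in> {(id, \<lambda>_. 1::int)}"
    thus "w \<in> {w\<in>weyl m. wact w (rho m) = rho m}"
      by (auto simp: weyl_def wact_def permutes_id)
  qed
  thus ?thesis by (simp add: altsum_def wsgn_def)
qed

lemma inner_lin: "inner_w m z (subv x y) = inner_w m z x - inner_w m z y"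
  unfolding inner_w_def subv_def by (simp add: right_diff_distrib sum_subtractf)
lemma inner_add: "inner_w m z (addv x y) = inner_w m z x + inner_w m z y"
  unfolding inner_w_def addv_def by (simp add: distrib_left sum.distrib)

lemma unique_zero:
  assumes "c \<in> grp_ring m" "gmult c (altsum m (rho m)) = (\<lambda>_. 0)"
  shows "c = (\<lambda>_. 0)"
proof (rule ccontr)
  define S where "S = {x. c x \<noteq> 0}"
  have fin: "finite S" and sub: "S \<subseteq> wts m" using assms(1) by (auto simp: grp_ring_def S_def)
  assume "c \<noteq> (\<lambda>_. 0)"
  hence ne: "S \<noteq> {}" by (auto simp: S_def)
  define \<phi> where "\<phi> = inner_w m (rho m)"
  define M where "M = Max (\<phi> ` S)"
  have "M \<in> \<phi> ` S" unfolding M_def using fin ne by (intro Max_in) auto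
  then obtain y0 where y0: "y0 \<in> S" "\<phi> y0 = M" by auto
  have ymax: "\<phi> y \<le> \<phi> y0" if "y \<in> S" for y
  proof -
    have "\<phi> y \<le> M" unfolding M_def using fin that by (intro Max_ge) auto
    thus ?thesis using y0(2) by simp
  qed
  define x where "x = addv y0 (rho m)"
  have xy0: "subv x y0 = rho m" by (auto simp: x_def subv_def addv_def)
  have zero: "c y * altsum m (rho m) (subv x y) = 0" if "y \<in> S" "y \<noteq> y0" for y
  proof (rule ccontr)
    assume "c y * altsum m (rho m) (subv x y) \<noteq> 0"
    hence "altsum m (rho m) (subv x y) \<noteq> 0" by simp
    have "{w\<in>weyl m. wact w (rho m) = subv x y} \<noteq> {}"
    proof
      assume "{w\<in>weyl m. wact w (rho m) = subv x y} = {}"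
      hence "altsum m (rho m) (subv x y) = 0" unfolding altsum_def by (simp only: sum.empty)
      thus False using \<open>altsum m (rho m) (subv x y) \<noteq> 0\<close> by simp
    qed
    then obtain w where w: "w \<in> weyl m" "wact w (rho m) = subv x y" by blast
    have "\<phi> (subv x y) = \<phi> y0 + \<phi> (rho m) - \<phi> y"
      unfolding \<phi>_def x_def inner_lin inner_add by simp
    moreover have "\<phi> (subv x y) \<le> \<phi> (rho m)" using phi_le[OF w(1)] w(2) by (simp add: \<phi>_def)
    moreover note ymax[OF that(1)]
    ultimately have "\<phi> (wact w (rho m)) = \<phi> (rho m)" using w(2) by simp
    hence "subv x y = rho m" using phi_eq[OF w(1)] w(2) by (simp add: \<phi>_def)
    hence "y = y0"
    proof -
      assume e: "subv x y = rho m"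
      have "y k = y0 k" for k using fun_cong[OF e, of k] fun_cong[OF xy0, of k] by (simp add: subv_def)
      thus ?thesis by (rule ext)
    qed
    thus False using that by simp
  qed
  have "gmult c (altsum m (rho m)) x = (\<Sum>y\<in>S. c y * altsum m (rho m) (subv x y))"
    by (simp add: gmult_def S_def)
  also have "\<dots> = c y0 * altsum m (rho m) (subv x y0)"
  proof -
    have "(\<Sum>y\<in>S - {y0}. c y * altsum m (rho m) (subv x y)) = 0"
      using zero by (intro sum.neutral) auto
    thus ?thesis using sum.remove[OF fin y0(1), of "\<lambda>y. c y * altsum m (rho m) (subv x y)"] by simp
  qed
  also have "\<dots> = c y0" using xy0 altsum_rho by simp
  finally have "c y0 = 0" using assms(2) by simp
  thus False using y0(1) by (simp add: S_def)
qed

lemma altsum_zero: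
  assumes "j \<in> {1..m}" "k \<in> {1..m}" "j \<noteq> k" "\<nu> j = \<nu> k"
  shows "altsum m \<nu> x = 0"
proof -
  define t where "t = Transposition.transpose j k"
  define f where "f = (\<lambda>w::(nat\<Rightarrow>nat)\<times>(nat\<Rightarrow>int). (t \<circ> fst w, snd w))"
  define T where "T = {w\<in>weyl m. wact w \<nu> = x}"
  have tp: "t permutes {1..m}" unfolding t_def using assms by (simp add: permutes_swap_id)
  have tt: "t \<circ> t = id" unfolding t_def by (simp add: fun_eq_iff)
  have nut: "\<nu> (t n) = \<nu> n" for n unfolding t_def using assms(4) by (auto simp: transpose_def)
  have ff: "f (f w) = w" for w by (simp add: f_def o_assoc tt)
  have fT: "f w \<in> T" if "w \<in> T" for w
    using that tp by (auto simp: T_def weyl_def f_def wact_def permutes_compose nut)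
  have bij: "bij_betw f T T"
    by (rule bij_betwI[where g=f]) (auto simp: fT ff)
  have sg: "wsgn m (f w) = - wsgn m w" if "w \<in> T" for w
  proof -
    have "fst w permutes {1..m}" using that by (auto simp: T_def weyl_def)
    hence "permutation (fst w)" using permutes_imp_permutation[of "{1..m}"] by simp
    moreover have "permutation t" using tp permutes_imp_permutation[of "{1..m}"] by simp
    ultimately have "sign (t \<circ> fst w) = sign t * sign (fst w)" by (simp add: sign_compose)
    moreover have "sign t = -1" using assms(3) by (simp add: t_def sign_swap_id)
    ultimately show ?thesis by (simp add: wsgn_def f_def)
  qed
  have "sum (wsgn m) T = sum (\<lambda>w. wsgn m (f w)) T"
    using sum.reindex_bij_betw[OF bij, of "wsgn m"] by simp
  also have "\<dots> = - sum (wsgn m) T" using sg by (simp add: sum_negf)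
  finally have "sum (wsgn m) T = 0" by simp
  thus ?thesis by (simp add: altsum_def T_def)
qed

lemma char_zero:
  assumes "j \<in> {1..m}" "k \<in> {1..m}" "j \<noteq> k" "addv \<mu> (rho m) j = addv \<mu> (rho m) k"
  shows "weyl_char m \<mu> = (\<lambda>_. 0)"
  unfolding weyl_char_def
proof (rule the_equality)
  show "(\<lambda>_. 0) \<in> grp_ring m \<and> gmult (\<lambda>_. 0) (altsum m (rho m)) = altsum m (addv \<mu> (rho m))"
    using altsum_zero[OF assms] by (auto simp: grp_ring_def gmult_def)
next
  fix c assume "c \<in> grp_ring m \<and> gmult c (altsum m (rho m)) = altsum m (addv \<mu> (rho m))"
  thus "c = (\<lambda>_. 0)" using altsum_zero[OF assms] unique_zero by (metis ext)
qed

theorem lemma2p1: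
  fixes p m i j :: nat and lam :: "nat \<Rightarrow> int" and a l :: int
  assumes "prime p" and "p > 2" and "m \<ge> 1"
    and "p_core p m lam"
    and "1 \<le> i" and "i < j" and "j \<le> m"
    and "coroot_pair m (addv lam (rho m)) (subv (eps i) (eps j)) = a + l * int p"
    and "a > 0" and "l > 0"
  shows "weyl_char m (dot m (s_aff p m (subv (eps i) (eps j)) l) lam) = (\<lambda>_. 0)"
proof -
  define \<nu> where "\<nu> = addv lam (rho m)"
  have ii: "i \<in> {1..m}" and jj: "j \<in> {1..m}" using assms by auto
  have cp: "\<nu> i - \<nu> j = a + l * int p"
    using assms(8) coroot_eps_diff[OF ii jj] assms(6) by (simp add: \<nu>_def)
  have dom: "dominant m lam" using assms(4) by (simp add: p_core_def)
  have "0 \<le> lam j" using dom jj by (simp add: dominant_def)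
  hence nuj: "\<nu> j \<ge> 1" using rho_pos[OF jj] by (simp add: \<nu>_def addv_def)
  have "\<nu> i - l * int p > 0" using cp nuj assms(9) by simp
  moreover have "l \<ge> 1" using assms(10) by simp
  ultimately have "\<exists>k\<in>{1..m}. \<nu> k = \<nu> i - l * int p"
    using assms(4) ii unfolding p_core_def \<nu>_def by blast
  then obtain k where k: "k \<in> {1..m}" "\<nu> k = \<nu> i - l * int p" by blast
  have kj: "k \<noteq> j" using k cp assms(9) by auto
  have lp: "l * int p > 0" using assms(2,10) by simp
  have ki: "k \<noteq> i" using k lp by auto
  define \<mu> where "\<mu> = dot m (s_aff p m (subv (eps i) (eps j)) l) lam"
  have mu: "addv \<mu> (rho m) n = \<nu> n - a * subv (eps i) (eps j) n" for n
    unfolding \<mu>_def dot_def s_aff_def subv_def addv_def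
    using cp assms(8) by (simp add: \<nu>_def addv_def subv_def)
  have "addv \<mu> (rho m) j = addv \<mu> (rho m) k"
    unfolding mu using k kj ki cp assms(6) by (simp add: subv_def eps_def)
  thus ?thesis using char_zero[OF jj k(1) kj[symmetric]] by (simp add: \<mu>_def)
qed

end
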